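(* Let $m$ and $d$ be positive integers with $m\ge3$. There exist a positive integer $N=N(m,d)$ and a block $B=(b_1,\ldots,b_N)\in\{0,1,\ldots,m-1\}^N$ such that for any real polynomial $P$ of degree $d$ and any sequence $(\eta_n)_n$ of real numbers with $|\eta_n|\le 1/20$ for all $n$, there exists $n\in[1,N]$ such that \[\lfloor P(n)+\eta_n\rfloor\not\equiv b_n\pmod m.\] *)

theory Defs
  imports Complex_Main "HOL-Computational_Algebra.Polynomial" "HOL-Number_Theory.Cong"
begin

end

theory Submission
  imports Defs "HOL-Real_Asymp.Real_Asymp" "HOL-Library.FuncSet"
begin

lemma exN:
  fixes m d :: nat
  assumes m3: "m \<ge> 3"
  shows "\<exists>N. N \<ge> d+1 \<and> real ((m * (20*(d+1)*N^d))^(d+1)) * 2^N < real m ^ N"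
proof -
  define C :: real where "C = 3^(d+1) * (20*(real d+1))^(d+1)"
  define k where "k = d*(d+1)"
  have "((\<lambda>n::nat. C * real n ^ k / (3/2)^n) \<longlongrightarrow> 0) sequentially"
    by real_asymp
  then have "eventually (\<lambda>n. C * real n ^ k / (3/2)^n < 1) sequentially"
    by (rule order_tendstoD) simp
  moreover have "eventually (\<lambda>n. n \<ge> d+1) sequentially"
    by (rule eventually_ge_at_top)
  ultimately have "eventually (\<lambda>n. C * real n ^ k / (3/2)^n < 1 \<and> n \<ge> d+1) sequentially"
    by (rule eventually_conj)
  then obtain N where N1: "C * real N ^ k / (3/2)^N < 1" and N2: "N \<ge> d+1"
    by (auto simp: eventually_sequentially)
  have "C * real N ^ k < (3/2)^N" using N1 by (simp add: field_simps)
  then have "C * real N ^ k * 2^N < (3/2)^N * 2^N" by simp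
  also have "(3/2)^N * 2^N = (3::real)^N" by (simp add: power_mult_distrib[symmetric])
  finally have A: "C * real N ^ k * 2^N < 3^N" .
  have e: "(3::real)^N = 3^(d+1) * 3^(N-(d+1))"
    by (metis N2 le_add_diff_inverse power_add)
  have em: "(real m)^N = real m^(d+1) * real m^(N-(d+1))"
    by (metis N2 le_add_diff_inverse power_add)
  have "real ((m * (20*(d+1)*N^d))^(d+1)) = (real m * (20*(real d+1)) * real N^d)^(d+1)"
    by (simp only: of_nat_mult of_nat_power of_nat_add of_nat_numeral of_nat_1 mult.assoc)
  also have "\<dots> = real m^(d+1) * (20*(real d+1))^(d+1) * real N^k"
    by (simp only: power_mult_distrib k_def power_mult)
  finally have "real ((m * (20*(d+1)*N^d))^(d+1)) * 2^N
      = real m^(d+1) * ((20*(real d+1))^(d+1) * real N ^ k * 2^N)"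
    by simp
  also have "(20*(real d+1))^(d+1) * real N ^ k * 2^N = C * real N ^ k * 2^N / 3^(d+1)"
    by (simp add: C_def)
  also have "\<dots> < 3^(N-(d+1))"
    using A e by (simp add: field_simps)
  finally have "real ((m * (20*(d+1)*N^d))^(d+1)) * 2^N < real m^(d+1) * 3^(N-(d+1))"
    using m3 by (simp add: mult_strict_left_mono)
  also have "\<dots> \<le> real m^(d+1) * real m^(N-(d+1))"
    using m3 by (intro mult_left_mono power_mono) auto
  finally show ?thesis using N2 em by auto
qed


lemma approx:
  fixes m d N K :: nat and P :: "real poly" and \<eta> :: "nat \<Rightarrow> real"
  assumes m0: "m > 0" and N1: "N \<ge> 1" and K: "K = 20*(d+1)*N^d"
    and deg: "degree P \<le> d" and eta: "\<forall>n. \<bar>\<eta> n\<bar> \<le> 1/20"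
  shows "\<exists>g\<in>PiE {..d} (\<lambda>_. {..<m*K}). \<forall>n\<in>{1..N}.
     \<lfloor>poly P (real n) + \<eta> n\<rfloor> mod int m \<in>
       {\<lfloor>(\<Sum>i\<le>d. real (g i) / real K * real n ^ i) - 1/10\<rfloor> mod int m,
        (\<lfloor>(\<Sum>i\<le>d. real (g i) / real K * real n ^ i) - 1/10\<rfloor> + 1) mod int m}"
proof -
  have Kpos: "real K > 0" using K N1 by simp
  define a where "a i = coeff P i" for i
  define kk where "kk i = \<lfloor>a i / real m\<rfloor>" for i
  define r where "r i = a i - real m * real_of_int (kk i)" for i
  have r0: "0 \<le> r i" and rm: "r i < real m" for i
  proof -
    have "real_of_int (kk i) \<le> a i / real m" "a i / real m < real_of_int (kk i) + 1"
      unfolding kk_def by linarith+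
    then show "0 \<le> r i" "r i < real m" using m0 unfolding r_def by (auto simp: field_simps)
  qed
  define g0 where "g0 i = nat \<lfloor>r i * real K\<rfloor>" for i
  define g where "g = restrict g0 {..d}"
  have g0le: "real (g0 i) \<le> r i * real K" and g0gt: "r i * real K < real (g0 i) + 1" for i
    using r0[of i] Kpos unfolding g0_def by (auto simp: mult_nonneg_nonneg)
  have gG: "g \<in> PiE {..d} (\<lambda>_. {..<m*K})"
  proof -
    have "g0 i < m*K" for i
    proof -
      have "real (g0 i) < real m * real K" using g0le[of i] rm[of i] Kpos
        by (smt (verit) mult_strict_right_mono)
      then show ?thesis by (metis of_nat_less_iff of_nat_mult)
    qed
    then show ?thesis unfolding g_def by auto
  qed
  show ?thesis
  proof (rule bexI[OF _ gG], intro ballI)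
    fix n assume n: "n \<in> {1..N}"
    define Q where "Q = (\<Sum>i\<le>d. real (g i) / real K * real n ^ i)"
    define E where "E = (\<Sum>i\<le>d. (r i - real (g i) / real K) * real n ^ i)"
    define T where "T = (\<Sum>i\<le>d. kk i * int n ^ i)"
    have "poly P (real n) = (\<Sum>i\<le>degree P. a i * real n ^ i)"
      by (simp add: poly_altdef a_def)
    also have "\<dots> = (\<Sum>i\<le>d. a i * real n ^ i)"
    proof (rule sum.mono_neutral_left)
      show "\<forall>i\<in>{..d} - {..degree P}. a i * real n ^ i = 0"
        by (auto simp: a_def coeff_eq_0)
    qed (use deg in auto)
    also have "\<dots> = Q + E + real m * real_of_int T"
      unfolding Q_def E_def T_def
      by (simp add: r_def sum.distrib[symmetric] sum_distrib_left algebra_simps)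
    finally have PE: "poly P (real n) = Q + E + real m * real_of_int T" .
    have E0: "E \<ge> 0" unfolding E_def
      using g0le by (intro sum_nonneg mult_nonneg_nonneg) (auto simp: g_def pos_divide_le_eq[OF Kpos] mult.commute)
    have "E \<le> (\<Sum>i\<le>d. (1 / real K) * real N ^ d)" unfolding E_def
    proof (rule sum_mono)
      fix i assume i: "i \<in> {..d}"
      have eq: "r i - real (g i) / real K = (r i * real K - real (g0 i)) / real K"
        using i Kpos by (simp add: g_def field_simps)
      have "r i - real (g i) / real K \<le> 1 / real K"
        unfolding eq using g0gt[of i] Kpos by (intro divide_right_mono) auto
      moreover have "r i - real (g i) / real K \<ge> 0"
        unfolding eq using g0le[of i] Kpos by (intro divide_nonneg_pos) auto
      moreover have "real n ^ i \<le> real N ^ d"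
      proof -
        have "real n ^ i \<le> real n ^ d" using n i by (intro power_increasing) auto
        also have "\<dots> \<le> real N ^ d" using n by (intro power_mono) auto
        finally show ?thesis .
      qed
      ultimately show "(r i - real (g i) / real K) * real n ^ i \<le> 1 / real K * real N ^ d"
        by (intro mult_mono) auto
    qed
    also have "\<dots> = 1/20"
    proof -
      have "real K = 20 * (real d + 1) * real N ^ d" using K by simp
      then have h: "(real d + 1) * real N ^ d = real K * (1/20)" by simp
      have "(\<Sum>i\<le>d. (1 / real K) * real N ^ d) = (real d + 1) * real N ^ d / real K"
        by simp
      also have "\<dots> = 1/20" unfolding h using Kpos by simp
      finally show ?thesis .
    qed
    finally have E1: "E \<le> 1/20" .
    define w where "w = Q + E + \<eta> n"
    have "poly P (real n) + \<eta> n = w + real_of_int (int m * T)" using PE unfolding w_def by simp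
    then have fl: "\<lfloor>poly P (real n) + \<eta> n\<rfloor> = \<lfloor>w\<rfloor> + int m * T"
      by (metis floor_add_int)
    have c1: "\<lfloor>Q - 1/10\<rfloor> \<le> \<lfloor>w\<rfloor>" using E0 eta[rule_format, of n] unfolding w_def
      by (intro floor_mono) auto
    have c2: "\<lfloor>w\<rfloor> \<le> \<lfloor>Q - 1/10\<rfloor> + 1"
    proof -
      have "w < real_of_int (\<lfloor>Q - 1/10\<rfloor> + 2)" using E1 eta[rule_format, of n] unfolding w_def
        by linarith
      then show ?thesis by linarith
    qed
    have "\<lfloor>w\<rfloor> = \<lfloor>Q - 1/10\<rfloor> \<or> \<lfloor>w\<rfloor> = \<lfloor>Q - 1/10\<rfloor> + 1" using c1 c2 by linarith
    moreover have "\<lfloor>poly P (real n) + \<eta> n\<rfloor> mod int m = \<lfloor>w\<rfloor> mod int m"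
      unfolding fl by simp
    ultimately show "\<lfloor>poly P (real n) + \<eta> n\<rfloor> mod int m \<in>
       {\<lfloor>Q - 1/10\<rfloor> mod int m, (\<lfloor>Q - 1/10\<rfloor> + 1) mod int m}" by auto
  qed
qed


theorem theorem6:
  fixes m d :: nat
  assumes "m \<ge> 3" and "d \<ge> 1"
  shows "\<exists>N::nat. N \<ge> 1 \<and> (\<exists>b :: nat \<Rightarrow> nat. (\<forall>n\<in>{1..N}. b n < m) \<and>
           (\<forall>(P :: real poly) (\<eta> :: nat \<Rightarrow> real).
              degree P = d \<longrightarrow> (\<forall>n. \<bar>\<eta> n\<bar> \<le> 1/20) \<longrightarrow>
              (\<exists>n\<in>{1..N}. \<not> [\<lfloor>poly P (real n) + \<eta> n\<rfloor> = int (b n)] (mod int m))))"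
proof -
  obtain N where N: "N \<ge> d+1" and ineq: "real ((m * (20*(d+1)*N^d))^(d+1)) * 2^N < real m ^ N"
    using exN[OF assms(1)] by blast
  have N1: "N \<ge> 1" using N by simp
  define K where "K = 20*(d+1)*N^d"
  define G where "G = PiE {..d} (\<lambda>_. {..<m*K})"
  define c where "c g n = \<lfloor>(\<Sum>i\<le>d. real (g i) / real K * real n ^ i) - 1/10\<rfloor>" for g :: "nat \<Rightarrow> nat" and n :: nat
  define S where "S g = PiE {1..N} (\<lambda>n. {nat (c g n mod int m), nat ((c g n + 1) mod int m)})" for g
  define B where "B = PiE {1..N} (\<lambda>_::nat. {..<m})"
  have cardB: "card B = m^N" unfolding B_def by (simp add: card_PiE)
  have cardG: "card G = (m*K)^(d+1)" unfolding G_def by (simp add: card_PiE)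
  have finG: "finite G" unfolding G_def by (simp add: finite_PiE)
  have cardS: "card (S g) \<le> 2^N" for g
  proof -
    have "card (S g) = (\<Prod>n\<in>{1..N}. card {nat (c g n mod int m), nat ((c g n + 1) mod int m)})"
      unfolding S_def by (simp add: card_PiE)
    also have "\<dots> \<le> (\<Prod>n\<in>{1..N}. 2)"
      by (intro prod_mono) (auto simp: card_insert_if)
    finally show ?thesis by simp
  qed
  have "card (\<Union>g\<in>G. S g) \<le> (\<Sum>g\<in>G. card (S g))"
    using finG by (rule card_UN_le)
  also have "\<dots> \<le> (\<Sum>g\<in>G. 2^N)" by (intro sum_mono cardS)
  also have "\<dots> = (m*K)^(d+1) * 2^N" using cardG by simp
  also have "\<dots> < m^N"
  proof -
    have "real ((m*K)^(d+1) * 2^N) < real (m^N)" using ineq unfolding K_def by simp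
    then show ?thesis by (simp only: of_nat_less_iff)
  qed
  finally have "card (\<Union>g\<in>G. S g) < card B" using cardB by simp
  moreover have "finite B" unfolding B_def by (simp add: finite_PiE)
  moreover have "finite (\<Union>g\<in>G. S g)" using finG unfolding S_def by (auto intro!: finite_PiE)
  ultimately have "\<not> B \<subseteq> (\<Union>g\<in>G. S g)" by (meson card_mono not_le)
  then obtain b where bB: "b \<in> B" and bS: "b \<notin> (\<Union>g\<in>G. S g)" by blast
  have bm: "\<forall>n\<in>{1..N}. b n < m" using bB unfolding B_def by auto
  have main: "\<exists>n\<in>{1..N}. \<not> [\<lfloor>poly P (real n) + \<eta> n\<rfloor> = int (b n)] (mod int m)"
    if deg: "degree P = d" and eta: "\<forall>n. \<bar>\<eta> n\<bar> \<le> 1/20" for P :: "real poly" and \<eta> :: "nat \<Rightarrow> real"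
  proof (rule ccontr)
    assume "\<not> ?thesis"
    then have cg: "\<forall>n\<in>{1..N}. [\<lfloor>poly P (real n) + \<eta> n\<rfloor> = int (b n)] (mod int m)" by blast
    obtain g where gG: "g \<in> G" and gm: "\<forall>n\<in>{1..N}. \<lfloor>poly P (real n) + \<eta> n\<rfloor> mod int m \<in>
       {c g n mod int m, (c g n + 1) mod int m}"
      using approx[of m N K d P \<eta>] assms N1 deg eta unfolding G_def c_def K_def by auto
    have "b \<in> S g"
      unfolding S_def PiE_iff
    proof (intro conjI ballI)
      fix n assume n: "n \<in> {1..N}"
      have cc: "[\<lfloor>poly P (real n) + \<eta> n\<rfloor> = int (b n)] (mod int m)"
        using cg n by blast
      have "\<lfloor>poly P (real n) + \<eta> n\<rfloor> mod int m = int (b n) mod int m"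
        using cc unfolding Cong.cong_def by assumption
      also have "\<dots> = int (b n)" using bm n by simp
      finally have "int (b n) \<in> {c g n mod int m, (c g n + 1) mod int m}" using gm n by metis
      then show "b n \<in> {nat (c g n mod int m), nat ((c g n + 1) mod int m)}" by auto
    next
      show "b \<in> extensional {1..N}" using bB unfolding B_def PiE_iff by blast
    qed
    then show False using bS gG by blast
  qed
  show ?thesis using N1 bm main by blast
qed

end
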